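(* In a positive, anchored hidden Markov model with any (measurable) policy $g$, there exists a constant $0<\lambda<1$ such that for all $Z\in\mathcal P(\mathcal P(S))$ and all $t\ge0$, $F^t(Z)(R^c)\le\lambda^t$.
   Context: Model: $(X_t)$ is a time-homogeneous Markov chain on $S=\{1,\dots,n\}$ with transition matrix $T$; $O$ is a finite index set of observation processes $Y^{(i)}_t$ with values in $V=\{1,\dots,m\}$ and observation matrices $M^{(i)}$, $M^{(i)}_{jk}=\mathbb P(Y^{(i)}_t=k\mid X_t=j)$. $\mathcal P(S)$ is the probability simplex in $\mathbb R^n$, $\delta(x)$ the point mass at $x\in S$, $\mathcal P(\mathcal P(S))$ the Radon probability measures on $\mathcal P(S)$. A policy is a function $g:\mathcal P(S)\to O$, $A_i=g^{-1}\{i\}$ (the observation process used at time $t+1$ is $g$ of the current information state, i.e. the posterior distribution of $X_t$). For $i\in O$, $y\in V$: $\alpha_{i,y}(z)=(zTM^{(i)})_y=\sum_{j,x}z_jT_{j,x}M^{(i)}_{x,y}$, and when $\alpha_{i,y}(z)>0$, $r_{i,y}(z)=\frac{\sum_{x,j}M^{(i)}_{x,y}T_{j,x}z_j\delta(x)}{\sum_{x,j}M^{(i)}_{x,y}T_{j,x}z_j}$. The transition function $F:\mathcal P(\mathcal P(S))\to\mathcal P(\mathcal P(S))$ is $F(\mu)=\sum_{i\in O}\sum_{y\in V}\int_{A_i}\alpha_{i,y}(z)\delta_{r_{i,y}(z)}\,d\mu(z)$ (terms with $\alpha_{i,y}(z)=0$ are zero). Positive: all entries of $T$ are strictly positive.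 Anchored: $(X_t)$ is ergodic and for each $i\in O$ there are $x_i\in S$, $y_i\in V$ with $M^{(i)}_{x_i,y_i}>0$ and $M^{(i)}_{x,y_i}=0$ for $x\ne x_i$. Orbit $R_x$: $\delta(x)$ together with all points $r_{i_k,y_k}\circ\cdots\circ r_{i_1,y_1}(\delta(x))$ ($k\ge1$, arbitrary $i_j\in O$, $y_j\in V$) such that each $\alpha_{i_{j+1},y_{j+1}}$ evaluated at the preceding point is positive. $R=\bigcup_{x\in S}R_x$, and $R^c$ is its complement in $\mathcal P(S)$. *)

theory Defs
  imports "HOL-Probability.Probability"
begin

text \<open>States: finite type 's (S = {1..n}); observation values: finite type 'v (V = {1..m});
  observation-process indices: finite type 'o (O).
  Transition matrix T :: 's => 's => real (T j x = T_{j,x});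
  observation matrices M :: 'o => 's => 'v => real (M i x y = M^(i)_{x,y}).
  Points of P(S) are vectors z :: real^'s.\<close>

definition stochastic_matrix :: "('a::finite \<Rightarrow> 'b::finite \<Rightarrow> real) \<Rightarrow> bool" where
  "stochastic_matrix A \<longleftrightarrow> (\<forall>j k. A j k \<ge> 0) \<and> (\<forall>j. (\<Sum>k\<in>UNIV. A j k) = 1)"

definition prob_simplex :: "(real^'s::finite) set" where
  "prob_simplex = {z. (\<forall>j. z $ j \<ge> 0) \<and> (\<Sum>j\<in>UNIV. z $ j) = 1}"

definition point_mass :: "'s::finite \<Rightarrow> real^'s" where
  "point_mass x = (\<chi> j. if j = x then 1 else 0)"

fun mpow :: "('s::finite \<Rightarrow> 's \<Rightarrow> real) \<Rightarrow> nat \<Rightarrow> 's \<Rightarrow> 's \<Rightarrow> real" where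
  "mpow T 0 = (\<lambda>j x. if j = x then 1 else 0)"
| "mpow T (Suc k) = (\<lambda>j x. \<Sum>y\<in>UNIV. mpow T k j y * T y x)"

definition irreducible_chain :: "('s::finite \<Rightarrow> 's \<Rightarrow> real) \<Rightarrow> bool" where
  "irreducible_chain T \<longleftrightarrow> (\<forall>j x. \<exists>k. mpow T k j x > 0)"

definition aperiodic_chain :: "('s::finite \<Rightarrow> 's \<Rightarrow> real) \<Rightarrow> bool" where
  "aperiodic_chain T \<longleftrightarrow> (\<forall>j. Gcd {k. 0 < k \<and> mpow T k j j > 0} = (1::nat))"

definition ergodic_chain :: "('s::finite \<Rightarrow> 's \<Rightarrow> real) \<Rightarrow> bool" where
  "ergodic_chain T \<longleftrightarrow> irreducible_chain T \<and> aperiodic_chain T"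

definition positive_hmm :: "('s::finite \<Rightarrow> 's \<Rightarrow> real) \<Rightarrow> bool" where
  "positive_hmm T \<longleftrightarrow> (\<forall>j x. T j x > 0)"

definition anchored_hmm :: "('s::finite \<Rightarrow> 's \<Rightarrow> real) \<Rightarrow> ('o::finite \<Rightarrow> 's \<Rightarrow> 'v::finite \<Rightarrow> real) \<Rightarrow> bool" where
  "anchored_hmm T M \<longleftrightarrow> ergodic_chain T \<and>
     (\<forall>i. \<exists>xi yi. M i xi yi > 0 \<and> (\<forall>x. x \<noteq> xi \<longrightarrow> M i x yi = 0))"

definition alpha :: "('s::finite \<Rightarrow> 's \<Rightarrow> real) \<Rightarrow> ('o \<Rightarrow> 's \<Rightarrow> 'v \<Rightarrow> real) \<Rightarrow> 'o \<Rightarrow> 'v \<Rightarrow> real^'s \<Rightarrow> real" where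
  "alpha T M i y z = (\<Sum>j\<in>UNIV. \<Sum>x\<in>UNIV. z $ j * T j x * M i x y)"

definition rupd :: "('s::finite \<Rightarrow> 's \<Rightarrow> real) \<Rightarrow> ('o \<Rightarrow> 's \<Rightarrow> 'v \<Rightarrow> real) \<Rightarrow> 'o \<Rightarrow> 'v \<Rightarrow> real^'s \<Rightarrow> real^'s" where
  "rupd T M i y z = (\<chi> x. (\<Sum>j\<in>UNIV. M i x y * T j x * z $ j) / alpha T M i y z)"

definition PS_space :: "(real^'s::finite) measure" where
  "PS_space = restrict_space borel prob_simplex"

text \<open>Probability measures on P(S) (Radon, as finite Borel measures on a compact metric space).\<close>
definition prob_on_PS :: "(real^'s::finite) measure \<Rightarrow> bool" where
  "prob_on_PS Z \<longleftrightarrow> prob_space Z \<and> sets Z = sets PS_space"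

text \<open>The transition function F on P(P(S)) for the policy g (A_i = g^{-1}{i}):
  F(mu)(B) = sum_i sum_y int_{A_i} alpha_{i,y}(z) * 1_B(r_{i,y}(z)) dmu(z);
  terms with alpha_{i,y}(z) = 0 vanish.\<close>
definition transF :: "('s::finite \<Rightarrow> 's \<Rightarrow> real) \<Rightarrow> ('o::finite \<Rightarrow> 's \<Rightarrow> 'v::finite \<Rightarrow> real)
    \<Rightarrow> (real^'s \<Rightarrow> 'o) \<Rightarrow> (real^'s) measure \<Rightarrow> (real^'s) measure" where
  "transF T M g \<mu> = measure_of prob_simplex (sets PS_space)
     (\<lambda>B. \<integral>\<^sup>+ z. ennreal (\<Sum>i\<in>UNIV. \<Sum>y\<in>UNIV.
            (if g z = i \<and> alpha T M i y z > 0 then alpha T M i y z * indicator B (rupd T M i y z) else 0)) \<partial>\<mu>)"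

inductive_set orbit :: "('s::finite \<Rightarrow> 's \<Rightarrow> real) \<Rightarrow> ('o \<Rightarrow> 's \<Rightarrow> 'v \<Rightarrow> real) \<Rightarrow> 's \<Rightarrow> (real^'s) set"
  for T M x where
  base: "point_mass x \<in> orbit T M x"
| step: "z \<in> orbit T M x \<Longrightarrow> alpha T M i y z > 0 \<Longrightarrow> rupd T M i y z \<in> orbit T M x"

definition orbit_union :: "('s::finite \<Rightarrow> 's \<Rightarrow> real) \<Rightarrow> ('o \<Rightarrow> 's \<Rightarrow> 'v \<Rightarrow> real) \<Rightarrow> (real^'s) set" where
  "orbit_union T M = (\<Union>x. orbit T M x)"

end

theory Submission
  imports Defs
begin

lemma alpha_cont: "continuous_on UNIV (alpha T M i y)"
  unfolding alpha_def by (intro continuous_intros)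
lemma alpha_meas: "alpha T M i y \<in> borel_measurable borel"
  by (rule borel_measurable_continuous_onI[OF alpha_cont])
lemma rupd_meas: "rupd T M i y \<in> borel_measurable borel"
proof -
  have c: "continuous_on UNIV (\<lambda>z::real^'a. \<Sum>j\<in>UNIV. M i k y * T j k * z $ j)" for k
    by (intro continuous_intros)
  have comp: "(\<lambda>z. rupd T M i y z $ k) \<in> borel_measurable borel" for k
  proof -
    have eq: "(\<lambda>z. rupd T M i y z $ k) = (\<lambda>z. (\<Sum>j\<in>UNIV. M i k y * T j k * z $ j) / alpha T M i y z)"
      by (simp add: rupd_def)
    show ?thesis unfolding eq
      by (rule borel_measurable_divide[OF borel_measurable_continuous_onI[OF c[of k]] alpha_meas[of T M i y]])
  qed
  show ?thesis
  proof (subst borel_measurable_euclidean_space, intro ballI)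
    fix b :: "real^'a" assume "b \<in> Basis"
    then obtain k where b: "b = axis k 1" by (auto simp: Basis_vec_def)
    show "(\<lambda>x. rupd T M i y x \<bullet> b) \<in> borel_measurable borel"
      unfolding b using comp[of k] by (simp add: inner_axis)
  qed
qed
lemma ps_closed: "closed (prob_simplex :: (real^'s::finite) set)"
proof -
  have e: "prob_simplex = (\<Inter>j. {z::real^'s. z $ j \<ge> 0}) \<inter> {z. (\<Sum>j\<in>UNIV. z $ j) = 1}"
    unfolding prob_simplex_def by auto
  have "closed {z::real^'s. (\<Sum>j\<in>UNIV. z $ j) = 1}"
    by (intro closed_Collect_eq continuous_intros)
  moreover have "closed {z::real^'s. z $ j \<ge> 0}" for j
    by (intro closed_Collect_le continuous_intros)
  ultimately show ?thesis unfolding e by (intro closed_Int closed_INT) auto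
qed

lemma alpha_nonneg:
  assumes "stochastic_matrix T" "stochastic_matrix (M i)" "z \<in> prob_simplex"
  shows "0 \<le> alpha T M i y z"
  using assms unfolding alpha_def stochastic_matrix_def prob_simplex_def
  by (intro sum_nonneg mult_nonneg_nonneg) auto

lemma alpha_sum:
  assumes "stochastic_matrix T" "stochastic_matrix (M i)" "z \<in> prob_simplex"
  shows "(\<Sum>y\<in>UNIV. alpha T M i y z) = 1"
proof -
  have "(\<Sum>y\<in>UNIV. alpha T M i y z) = (\<Sum>j\<in>UNIV. \<Sum>y\<in>UNIV. \<Sum>x\<in>UNIV. z $ j * T j x * M i x y)"
    unfolding alpha_def by (rule sum.swap)
  also have "\<dots> = (\<Sum>j\<in>UNIV. \<Sum>x\<in>UNIV. \<Sum>y\<in>UNIV. z $ j * T j x * M i x y)"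
    by (intro sum.cong refl sum.swap)
  also have "\<dots> = (\<Sum>j\<in>UNIV. \<Sum>x\<in>UNIV. z $ j * T j x * (\<Sum>y\<in>UNIV. M i x y))"
    by (simp add: sum_distrib_left)
  also have "\<dots> = (\<Sum>j\<in>UNIV. z $ j * (\<Sum>x\<in>UNIV. T j x))"
    using assms(2) by (simp add: stochastic_matrix_def sum_distrib_left)
  also have "\<dots> = 1"
    using assms(1,3) by (simp add: stochastic_matrix_def prob_simplex_def)
  finally show ?thesis .
qed

lemma alpha_anchor:
  assumes "\<And>x. x \<noteq> x0 \<Longrightarrow> M i x y = 0"
  shows "alpha T M i y z = (\<Sum>j\<in>UNIV. z $ j * (T j x0 * M i x0 y))"
proof -
  have "(\<Sum>x\<in>UNIV. z $ j * T j x * M i x y) = z $ j * (T j x0 * M i x0 y)" for j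
    by (subst sum.remove[of _ x0]) (auto simp: assms)
  then show ?thesis unfolding alpha_def by simp
qed

lemma alpha_lower:
  assumes "\<And>x. x \<noteq> x0 \<Longrightarrow> M i x y = 0" "z \<in> prob_simplex"
    and "\<And>j. c \<le> T j x0 * M i x0 y"
  shows "c \<le> alpha T M i y z"
proof -
  have "c = (\<Sum>j\<in>UNIV. z $ j * c)"
    using assms(2) by (simp add: prob_simplex_def sum_distrib_right[symmetric])
  also have "\<dots> \<le> (\<Sum>j\<in>UNIV. z $ j * (T j x0 * M i x0 y))"
    using assms(2,3) by (intro sum_mono mult_left_mono) (auto simp: prob_simplex_def)
  finally show ?thesis using alpha_anchor[of x0 M i y T z, OF assms(1)] by simp
qed

lemma rupd_anchor:
  assumes "\<And>x. x \<noteq> x0 \<Longrightarrow> M i x y = 0" "alpha T M i y z > 0"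
  shows "rupd T M i y z = point_mass x0"
proof -
  have "(\<Sum>j\<in>UNIV. M i x0 y * T j x0 * z $ j) = alpha T M i y z"
    using alpha_anchor[of x0 M i y T z, OF assms(1)] by (simp add: algebra_simps)
  then show ?thesis
    using assms unfolding rupd_def point_mass_def by (auto simp: vec_eq_iff)
qed
definition wgt :: "('s::finite \<Rightarrow> 's \<Rightarrow> real) \<Rightarrow> ('o \<Rightarrow> 's \<Rightarrow> 'v \<Rightarrow> real) \<Rightarrow> (real^'s \<Rightarrow> 'o) \<Rightarrow> 'o \<Rightarrow> 'v \<Rightarrow> real^'s \<Rightarrow> real" where
  "wgt T M g i y z = (if g z = i \<and> alpha T M i y z > 0 then alpha T M i y z else 0)"

lemma wgt_nonneg: "0 \<le> wgt T M g i y z"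
  unfolding wgt_def by auto

lemma space_PS: "space PS_space = prob_simplex"
  unfolding PS_space_def by (simp add: space_restrict_space)

lemma sets_PS_borel: "B \<in> sets PS_space \<Longrightarrow> B \<in> sets borel"
  unfolding PS_space_def
  using sets_restrict_space_iff[of prob_simplex borel B] borel_closed[OF ps_closed] by auto

lemma term_meas:
  assumes gm: "g \<in> PS_space \<rightarrow>\<^sub>M count_space UNIV" and B: "B \<in> sets PS_space"
  shows "(\<lambda>z. ennreal (wgt T M g i y z) * indicator B (rupd T M i y z)) \<in> borel_measurable PS_space"
proof -
  have a: "alpha T M i y \<in> borel_measurable PS_space"
    unfolding PS_space_def by (rule measurable_restrict_space1[OF alpha_meas])
  have r: "rupd T M i y \<in> PS_space \<rightarrow>\<^sub>M borel"
    unfolding PS_space_def by (rule measurable_restrict_space1[OF rupd_meas])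
  have p: "Measurable.pred PS_space (\<lambda>z. g z = i)"
    by (rule pred_count_space_const1[OF gm])
  have w: "wgt T M g i y \<in> borel_measurable PS_space"
    unfolding wgt_def[abs_def] using a p by measurable
  have ind: "(\<lambda>z. indicator B (rupd T M i y z) :: ennreal) \<in> borel_measurable PS_space"
    using measurable_compose[OF r borel_measurable_indicator[OF sets_PS_borel[OF B]]] by (simp add: comp_def)
  show ?thesis using w ind by measurable
qed

definition integrand where
  "integrand T M g B z = (\<Sum>i\<in>UNIV. \<Sum>y\<in>UNIV. ennreal (wgt T M g i y z) * indicator B (rupd T M i y z))"

lemma integrand_eq:
  "ennreal (\<Sum>i\<in>UNIV. \<Sum>y\<in>UNIV.
            (if g z = i \<and> alpha T M i y z > 0 then alpha T M i y z * indicator B (rupd T M i y z) else 0))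
   = integrand T M g B z"
proof -
  have "(\<Sum>i\<in>UNIV. \<Sum>y\<in>UNIV.
            (if g z = i \<and> alpha T M i y z > 0 then alpha T M i y z * indicator B (rupd T M i y z) else 0))
     = (\<Sum>i\<in>UNIV. \<Sum>y\<in>UNIV. wgt T M g i y z * indicator B (rupd T M i y z))"
    unfolding wgt_def by (intro sum.cong refl) auto
  then show ?thesis unfolding integrand_def
    by (simp add: wgt_nonneg sum_nonneg ennreal_mult' ennreal_indicator flip: sum_ennreal)
qed

lemma integrand_meas:
  assumes gm: "g \<in> PS_space \<rightarrow>\<^sub>M count_space UNIV" and B: "B \<in> sets PS_space"
  shows "integrand T M g B \<in> borel_measurable PS_space"
  unfolding integrand_def[abs_def]
  by (intro borel_measurable_sum term_meas[OF gm B])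

lemma transF_sets:
  "sets (transF T M g \<mu>) = sets PS_space"
  unfolding transF_def space_PS[symmetric] by simp

lemma transF_emeasure:
  fixes T :: "'s::finite \<Rightarrow> 's \<Rightarrow> real" and \<mu> :: "(real^'s) measure"
  assumes gm: "g \<in> PS_space \<rightarrow>\<^sub>M count_space UNIV" and s\<mu>: "sets \<mu> = sets PS_space"
    and B: "B \<in> sets PS_space"
  shows "emeasure (transF T M g \<mu>) B = (\<integral>\<^sup>+ z. integrand T M g B z \<partial>\<mu>)"
proof -
  define \<nu> where "\<nu> B = (\<integral>\<^sup>+ z. integrand T M g B z \<partial>\<mu>)" for B
  have tf: "transF T M g \<mu> = measure_of (space PS_space) (sets PS_space) \<nu>"
    unfolding transF_def space_PS \<nu>_def integrand_eq ..
  have meas: "integrand T M g A \<in> borel_measurable \<mu>" if "A \<in> sets PS_space" for A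
    by (subst measurable_cong_sets[OF s\<mu> refl]) (rule integrand_meas[OF gm that])
  have tmeas: "(\<lambda>z. ennreal (wgt T M g i y z) * indicator A (rupd T M i y z)) \<in> borel_measurable \<mu>"
    if "A \<in> sets PS_space" for A i y
    by (subst measurable_cong_sets[OF s\<mu> refl]) (rule term_meas[OF gm that])
  have sa: "sigma_algebra (space PS_space) (sets (PS_space :: (real^'s) measure))"
    using measure_space[of "PS_space :: (real^'s) measure"] unfolding measure_space_def by (elim conjE)
  have pos: "positive (sets (PS_space :: (real^'s) measure)) \<nu>"
    unfolding positive_def \<nu>_def integrand_def by simp
  have ca: "countably_additive (sets (PS_space :: (real^'s) measure)) \<nu>"
  proof (unfold countably_additive_def, intro allI impI)
    fix A :: "nat \<Rightarrow> (real^'s) set"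
    assume A: "range A \<subseteq> sets PS_space" "disjoint_family A" "\<Union> (range A) \<in> sets PS_space"
    have "(\<Sum>n. \<nu> (A n)) = (\<integral>\<^sup>+ z. (\<Sum>n. integrand T M g (A n) z) \<partial>\<mu>)"
      unfolding \<nu>_def using A(1) meas by (intro nn_integral_suminf[symmetric]) auto
    also have "\<dots> = (\<integral>\<^sup>+ z. integrand T M g (\<Union> (range A)) z \<partial>\<mu>)"
    proof (intro nn_integral_cong)
      fix z
      have "(\<Sum>n. integrand T M g (A n) z)
          = (\<Sum>i\<in>UNIV. \<Sum>y\<in>UNIV. \<Sum>n. ennreal (wgt T M g i y z) * indicator (A n) (rupd T M i y z))"
        unfolding integrand_def
        apply (subst suminf_sum, rule summableI)
        apply (intro sum.cong refl)
        apply (subst suminf_sum, rule summableI)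
        apply (rule refl)
        done
      also have "\<dots> = integrand T M g (\<Union> (range A)) z"
        unfolding integrand_def ennreal_suminf_cmult suminf_indicator[OF A(2)] ..
      finally show "(\<Sum>n. integrand T M g (A n) z) = integrand T M g (\<Union> (range A)) z" .
    qed
    finally show "(\<Sum>n. \<nu> (A n)) = \<nu> (\<Union> (range A))" unfolding \<nu>_def .
  qed
  show ?thesis
    unfolding tf using emeasure_measure_of_sigma[OF sa pos ca B] by (simp add: \<nu>_def)
qed
lemma orbit_step_union:
  "z \<in> orbit_union T M \<Longrightarrow> alpha T M i y z > 0 \<Longrightarrow> rupd T M i y z \<in> orbit_union T M"
  unfolding orbit_union_def by (auto intro: orbit.step)

lemma point_mass_union: "point_mass x \<in> orbit_union T M"
  unfolding orbit_union_def by (auto intro: orbit.base)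

lemma pointwise:
  fixes T :: "'s::finite \<Rightarrow> 's \<Rightarrow> real" and M :: "'o::finite \<Rightarrow> 's \<Rightarrow> 'v::finite \<Rightarrow> real"
  assumes sT: "stochastic_matrix T" and sM: "\<And>i. stochastic_matrix (M i)"
    and anc: "\<And>i x. x \<noteq> xi i \<Longrightarrow> M i x (yi i) = 0"
    and hc: "\<And>i j. c \<le> T j (xi i) * M i (xi i) (yi i)" and cpos: "0 < c"
    and lam: "1 - c \<le> lam" "0 \<le> lam"
    and z: "z \<in> prob_simplex" and N: "N = prob_simplex - orbit_union T M"
  shows "(\<Sum>i\<in>UNIV. \<Sum>y\<in>UNIV. wgt T M g i y z * indicator N (rupd T M i y z)) \<le> lam * indicator N z"
proof -
  define i0 where "i0 = g z"
  define f where "f i y = wgt T M g i y z * indicator N (rupd T M i y z)" for i y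
  have z0: "f i y = 0" if "i \<noteq> i0" for i y
    using that unfolding f_def wgt_def i0_def by auto
  have red: "(\<Sum>i\<in>UNIV. \<Sum>y\<in>UNIV. f i y) = (\<Sum>y\<in>UNIV. f i0 y)"
    by (subst sum.remove[of UNIV i0]) (auto simp: z0)
  have G: "(\<Sum>i\<in>UNIV. \<Sum>y\<in>UNIV. wgt T M g i y z * indicator N (rupd T M i y z)) = (\<Sum>y\<in>UNIV. f i0 y)"
    using red by (simp only: f_def)
  show ?thesis
  proof (cases "z \<in> orbit_union T M")
    case True
    have "f i0 y = 0" for y
    proof (cases "alpha T M i0 y z > 0")
      case True
      then have "rupd T M i0 y z \<notin> N" using orbit_step_union[OF \<open>z \<in> orbit_union T M\<close>] N by auto
      then show ?thesis unfolding f_def by simp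
    next
      case False then show ?thesis unfolding f_def wgt_def by simp
    qed
    moreover have "indicator N z = (0::real)" using True N by simp
    ultimately show ?thesis unfolding G by simp
  next
    case False
    then have zN: "indicator N z = (1::real)" using z N by simp
    have fy: "f i0 y \<le> (if y = yi i0 then 0 else alpha T M i0 y z)" for y
    proof (cases "y = yi i0")
      case True
      show ?thesis
      proof (cases "alpha T M i0 y z > 0")
        case True
        then have "rupd T M i0 y z = point_mass (xi i0)"
          using rupd_anchor[of "xi i0" M i0 y T z] anc \<open>y = yi i0\<close> by blast
        then have "rupd T M i0 y z \<notin> N" using point_mass_union N by auto
        then show ?thesis using \<open>y = yi i0\<close> unfolding f_def by simp
      next
        case False then show ?thesis using \<open>y = yi i0\<close> unfolding f_def wgt_def by simp
      qed
    next
      case False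
      have "f i0 y \<le> wgt T M g i0 y z"
        unfolding f_def using wgt_nonneg[of T M g i0 y z]
        by (simp add: indicator_def)
      also have "\<dots> \<le> alpha T M i0 y z"
        unfolding wgt_def using alpha_nonneg[where T=T and M=M and i=i0 and z=z and y=y, OF sT sM[of i0] z] by simp
      finally show ?thesis using False by simp
    qed
    have "(\<Sum>y\<in>UNIV. f i0 y) \<le> (\<Sum>y\<in>UNIV. if y = yi i0 then 0 else alpha T M i0 y z)"
      by (rule sum_mono) (rule fy)
    also have "\<dots> = (\<Sum>y\<in>UNIV. alpha T M i0 y z) - alpha T M i0 (yi i0) z"
    proof -
      have e: "(if y = yi i0 then 0 else alpha T M i0 y z) = alpha T M i0 y z - (if y = yi i0 then alpha T M i0 (yi i0) z else 0)" for y
        by simp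
      show ?thesis unfolding e sum_subtractf sum.delta by simp
    qed
    also have "\<dots> \<le> 1 - c"
      using alpha_sum[where T=T and M=M and i=i0 and z=z, OF sT sM[of i0] z] alpha_lower[of "xi i0" M i0 "yi i0" z c T] anc hc z by simp
    also have "\<dots> \<le> lam * indicator N z" using lam zN by simp
    finally show ?thesis unfolding G .
  qed
qed
lemma integrand_real:
  "integrand T M g B z = ennreal (\<Sum>i\<in>UNIV. \<Sum>y\<in>UNIV. wgt T M g i y z * indicator B (rupd T M i y z))"
  unfolding integrand_def
  by (simp add: wgt_nonneg sum_nonneg ennreal_mult' ennreal_indicator flip: sum_ennreal)

lemma contraction:
  fixes T :: "'s::finite \<Rightarrow> 's \<Rightarrow> real" and M :: "'o::finite \<Rightarrow> 's \<Rightarrow> 'v::finite \<Rightarrow> real"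
    and \<mu> :: "(real^'s) measure"
  assumes sT: "stochastic_matrix T" and sM: "\<And>i. stochastic_matrix (M i)"
    and anc: "\<And>i x. x \<noteq> xi i \<Longrightarrow> M i x (yi i) = 0"
    and hc: "\<And>i j. c \<le> T j (xi i) * M i (xi i) (yi i)" and cpos: "0 < c"
    and lam: "1 - c \<le> lam" "0 \<le> lam"
    and N: "N = prob_simplex - orbit_union T M" and NS: "N \<in> sets PS_space"
    and gm: "g \<in> PS_space \<rightarrow>\<^sub>M count_space UNIV" and s\<mu>: "sets \<mu> = sets PS_space"
  shows "emeasure (transF T M g \<mu>) N \<le> ennreal lam * emeasure \<mu> N"
proof -
  have sp: "space \<mu> = prob_simplex"
    using sets_eq_imp_space_eq[OF s\<mu>] space_PS by simp
  have "emeasure (transF T M g \<mu>) N = (\<integral>\<^sup>+ z. integrand T M g N z \<partial>\<mu>)"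
    by (rule transF_emeasure[OF gm s\<mu> NS])
  also have "\<dots> \<le> (\<integral>\<^sup>+ z. ennreal lam * indicator N z \<partial>\<mu>)"
  proof (rule nn_integral_mono)
    fix z assume "z \<in> space \<mu>"
    then have z: "z \<in> prob_simplex" using sp by simp
    have "(\<Sum>i\<in>UNIV. \<Sum>y\<in>UNIV. wgt T M g i y z * indicator N (rupd T M i y z)) \<le> lam * indicator N z"
      by (rule pointwise[OF sT sM anc hc cpos lam z N])
    then have "integrand T M g N z \<le> ennreal (lam * indicator N z)"
      unfolding integrand_real by (rule ennreal_leI)
    also have "\<dots> = ennreal lam * indicator N z"
      by (cases "z \<in> N") auto
    finally show "integrand T M g N z \<le> ennreal lam * indicator N z" .
  qed
  also have "\<dots> = ennreal lam * emeasure \<mu> N"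
    using NS s\<mu> by (intro nn_integral_cmult_indicator) simp
  finally show ?thesis .
qed

theorem proposition2p21:
  fixes T :: "'s::finite \<Rightarrow> 's \<Rightarrow> real"
    and M :: "'o::finite \<Rightarrow> 's \<Rightarrow> 'v::finite \<Rightarrow> real"
    and g :: "real^'s \<Rightarrow> 'o"
  assumes "stochastic_matrix T"
    and "\<And>i. stochastic_matrix (M i)"
    and "positive_hmm T"
    and "anchored_hmm T M"
    and "g \<in> PS_space \<rightarrow>\<^sub>M count_space UNIV"
  shows "\<exists>lam::real. 0 < lam \<and> lam < 1 \<and>
    (\<forall>Z t. prob_on_PS Z \<longrightarrow>
       measure ((transF T M g ^^ t) Z) (prob_simplex - orbit_union T M) \<le> lam ^ t)"
proof -
  note sT = assms(1) and sM = assms(2) and gm = assms(5)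
  have "\<forall>i. \<exists>xi yi. M i xi yi > 0 \<and> (\<forall>x. x \<noteq> xi \<longrightarrow> M i x yi = 0)"
    using assms(4) unfolding anchored_hmm_def by blast
  then obtain xi where "\<forall>i. \<exists>yi. M i (xi i) yi > 0 \<and> (\<forall>x. x \<noteq> xi i \<longrightarrow> M i x yi = 0)"
    by metis
  then obtain yi where anc0: "\<forall>i. M i (xi i) (yi i) > 0 \<and> (\<forall>x. x \<noteq> xi i \<longrightarrow> M i x (yi i) = 0)"
    by metis
  have anc: "\<And>i x. x \<noteq> xi i \<Longrightarrow> M i x (yi i) = 0" using anc0 by blast
  define C where "C = (\<lambda>(i,j). T j (xi i) * M i (xi i) (yi i)) ` (UNIV :: ('o \<times> 's) set)"
  define c where "c = Min C"
  have finC: "finite C" "C \<noteq> {}" unfolding C_def by auto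
  have hc: "c \<le> T j (xi i) * M i (xi i) (yi i)" for i j
    unfolding c_def using finC by (intro Min_le) (auto simp: C_def)
  have cpos: "0 < c"
  proof -
    have "\<forall>a\<in>C. 0 < a"
      using anc0 assms(3) unfolding C_def positive_hmm_def by auto
    then show ?thesis unfolding c_def using finC by simp
  qed
  define lam where "lam = max (1 - c) (1/2)"
  have lam: "1 - c \<le> lam" "0 \<le> lam" "0 < lam" "lam < 1"
    unfolding lam_def using cpos by auto
  define N where "N = prob_simplex - orbit_union T M"
  define F where "F = transF T M g"
  have main: "measure ((F ^^ t) Z) N \<le> lam ^ t" if PZ: "prob_on_PS Z" for Z t
  proof -
    have PS: "prob_space Z" "sets Z = sets PS_space"
      using PZ unfolding prob_on_PS_def by auto
    have sets: "sets ((F ^^ t) Z) = sets PS_space" for t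
      by (cases t) (simp_all add: PS F_def transF_sets)
    show ?thesis
    proof (cases "N \<in> sets PS_space")
      case False
      show ?thesis
      proof (cases t)
        case 0
        then show ?thesis using prob_space.prob_le_1[OF PS(1)] by simp
      next
        case (Suc n)
        have "N \<notin> sets ((F ^^ t) Z)" using False sets by simp
        then have "measure ((F ^^ t) Z) N = 0" by (rule measure_notin_sets)
        then show ?thesis using lam by simp
      qed
    next
      case True
      have em: "emeasure ((F ^^ t) Z) N \<le> ennreal (lam ^ t)" for t
      proof (induction t)
        case 0
        then show ?case using prob_space.emeasure_le_1[OF PS(1)] by simp
      next
        case (Suc t)
        have "emeasure ((F ^^ Suc t) Z) N = emeasure (transF T M g ((F ^^ t) Z)) N"
          by (simp add: F_def)
        also have "\<dots> \<le> ennreal lam * emeasure ((F ^^ t) Z) N"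
          by (rule contraction[OF sT sM anc hc cpos lam(1,2) N_def True gm sets])
        also have "\<dots> \<le> ennreal lam * ennreal (lam ^ t)"
          by (rule mult_left_mono[OF Suc]) simp
        also have "\<dots> = ennreal (lam ^ Suc t)"
          using lam by (simp add: ennreal_mult')
        finally show ?case .
      qed
      have "measure ((F ^^ t) Z) N = enn2real (emeasure ((F ^^ t) Z) N)"
        by (simp add: measure_def)
      also have "\<dots> \<le> enn2real (ennreal (lam ^ t))"
        by (rule enn2real_mono[OF em]) simp
      also have "\<dots> = lam ^ t" using lam by simp
      finally show ?thesis .
    qed
  qed
  show ?thesis
    using lam main unfolding F_def N_def by blast
qed

end
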